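(* Let $n\ge 2$, let $T=\{1,\dots,n\}$ and let $\mathcal T$ be a topology on $T$. Fix an integer $k\ge 1$. Let $A,R\subseteq T\setminus\{n\}$ be disjoint sets such that every point of $A$ is old (at stage $k$), every point of $R$ is new (at stage $k$), $R\neq\emptyset$, and $A\cup R$ is a new upper $k$-system of $\mathcal T$. Then $A$ is open in $\mathcal T$.
   Context: For $\alpha\in T$, $\alpha^{*}$ (the covering set of $\alpha$) denotes the smallest open set of $\mathcal T$ containing $\alpha$. For an integer $m\ge 0$, an $m$-system is an open set $P$ of $\mathcal T$ such that $P\setminus\{n\}$ has exactly $m$ points; it is upper if $n\notin P$ and lower if $n\in P$. For fixed $k$, a point $\alpha\neq n$ is called old if $\alpha^{*}$ is an $m$-system for some $m<k$, and new if $\alpha^{*}$ is a $k$-system. A $k$-system is called new if it contains at least one point $p\neq n$ that is not contained in any $m$-system with $m\le k-1$. *)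

theory Defs
  imports "HOL-Analysis.Analysis"
begin

text \<open>Finite topological space on T = {1..n}, represented by X :: nat topology
  with topspace X = {1..n}. The distinguished point is n.\<close>

definition covering_set :: "nat topology \<Rightarrow> nat \<Rightarrow> nat set" where
  "covering_set X a = \<Inter> {U. openin X U \<and> a \<in> U}"

definition m_system :: "nat topology \<Rightarrow> nat \<Rightarrow> nat \<Rightarrow> nat set \<Rightarrow> bool" where
  "m_system X n m P \<longleftrightarrow> openin X P \<and> finite (P - {n}) \<and> card (P - {n}) = m"

definition upper_system :: "nat topology \<Rightarrow> nat \<Rightarrow> nat \<Rightarrow> nat set \<Rightarrow> bool" where
  "upper_system X n m P \<longleftrightarrow> m_system X n m P \<and> n \<notin> P"

definition lower_system :: "nat topology \<Rightarrow> nat \<Rightarrow> nat \<Rightarrow> nat set \<Rightarrow> bool" where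
  "lower_system X n m P \<longleftrightarrow> m_system X n m P \<and> n \<in> P"

definition old_point :: "nat topology \<Rightarrow> nat \<Rightarrow> nat \<Rightarrow> nat \<Rightarrow> bool" where
  "old_point X n k a \<longleftrightarrow> a \<noteq> n \<and> (\<exists>m<k. m_system X n m (covering_set X a))"

definition new_point :: "nat topology \<Rightarrow> nat \<Rightarrow> nat \<Rightarrow> nat \<Rightarrow> bool" where
  "new_point X n k a \<longleftrightarrow> a \<noteq> n \<and> m_system X n k (covering_set X a)"

definition new_system :: "nat topology \<Rightarrow> nat \<Rightarrow> nat \<Rightarrow> nat set \<Rightarrow> bool" where
  "new_system X n k P \<longleftrightarrow> m_system X n k P \<and>
     (\<exists>p\<in>P. p \<noteq> n \<and> \<not> (\<exists>m Q. m \<le> k - 1 \<and> m_system X n m Q \<and> p \<in> Q))"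

end

theory Submission
  imports Defs
begin

lemma cov_sub: "openin X U \<Longrightarrow> a \<in> U \<Longrightarrow> covering_set X a \<subseteq> U"
  unfolding covering_set_def by blast

lemma cov_mem: "a \<in> topspace X \<Longrightarrow> a \<in> covering_set X a"
  unfolding covering_set_def by auto

theorem lemma1:
  fixes X :: "nat topology" and n k :: nat and A R :: "nat set"
  assumes "n \<ge> 2"
    and "topspace X = {1..n}"
    and "k \<ge> 1"
    and "A \<subseteq> {1..n} - {n}" and "R \<subseteq> {1..n} - {n}"
    and "A \<inter> R = {}"
    and "\<forall>a\<in>A. old_point X n k a"
    and "\<forall>r\<in>R. new_point X n k r"
    and "R \<noteq> {}"
    and "upper_system X n k (A \<union> R)"
    and "new_system X n k (A \<union> R)"
  shows "openin X A"
proof -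
  have P: "openin X (A \<union> R)" using assms(10) by (simp add: upper_system_def m_system_def)
  have key: "covering_set X a \<subseteq> A" if a: "a \<in> A" for a
  proof
    fix x assume x: "x \<in> covering_set X a"
    obtain m where m: "m < k" "m_system X n m (covering_set X a)"
      using assms(7) a by (auto simp: old_point_def)
    have amem: "a \<in> topspace X" using a assms(2,4) by auto
    have "covering_set X a \<subseteq> A \<union> R" using cov_sub[OF P] a by blast
    then have xin: "x \<in> A \<union> R" using x by blast
    show "x \<in> A"
    proof (rule ccontr)
      assume "x \<notin> A"
      then have xr: "x \<in> R" using xin by blast
      then have nr: "m_system X n k (covering_set X x)" using assms(8) by (auto simp: new_point_def)
      have "covering_set X x \<subseteq> covering_set X a"
        using cov_sub[of X "covering_set X a" x] m(2) x by (simp add: m_system_def)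
      then have "covering_set X x - {n} \<subseteq> covering_set X a - {n}" by blast
      then have "card (covering_set X x - {n}) \<le> card (covering_set X a - {n})"
        using m(2) by (intro card_mono) (auto simp: m_system_def)
      then show False using m nr by (auto simp: m_system_def)
    qed
  qed
  have "A = \<Union> ((covering_set X) ` A)"
  proof
    show "A \<subseteq> \<Union> (covering_set X ` A)"
    proof
      fix a assume a: "a \<in> A"
      have "a \<in> topspace X" using a assms(2,4) by auto
      then show "a \<in> \<Union> (covering_set X ` A)" using cov_mem a by blast
    qed
    show "\<Union> (covering_set X ` A) \<subseteq> A" using key by blast
  qed
  moreover have "openin X (\<Union> ((covering_set X) ` A))"
    using assms(7) by (intro openin_Union) (auto simp: old_point_def m_system_def)
  ultimately show ?thesis by simp
qed

end
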